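(* Let $n \geqslant 5$ be odd and let $\lambda$ be a natural number with $\frac{n+3}{4} \leqslant \lambda \leqslant \frac{n-1}{2}$. Then the partition $\left(\lambda+1,\ \frac{n+3-2\lambda}{2},\ 2\times\left(\frac{n-1}{2}-\lambda\right),\ 1\times\frac{4\lambda-n-3}{2}\right)$ of $n$ corresponds to the eigenvalue $\lambda$.
   Context: In a partition, the notation $a\times t$ means that the part $a$ is repeated $t$ times (possibly $t=0$). An integer partition $(n_1,\dots,n_k)$ of $n$ (with $n_1\geqslant \dots\geqslant n_k\geqslant 1$, $\sum_j n_j=n$) is said to correspond to the eigenvalue $\lambda$ if $\lambda=\sum_{j=1}^k \frac{n_j(n_j-2j+1)}{2}$; this is the eigenvalue of the Transposition graph $T_n=\mathrm{Cay}(\mathrm{Sym}_n,T)$ ($T$ the set of all transpositions) associated with the irreducible character of $\mathrm{Sym}_n$ indexed by the partition. *)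

theory Defs
  imports Complex_Main
begin

definition is_partition :: "nat list \<Rightarrow> nat \<Rightarrow> bool" where
  "is_partition ps n \<longleftrightarrow> sorted_wrt (\<ge>) ps \<and> (\<forall>p\<in>set ps. p \<ge> 1) \<and> sum_list ps = n"

text \<open>Eigenvalue of the transposition graph attached to a partition:
  sum over j = 1..k of n_j (n_j - 2j + 1) / 2 (list index i = j - 1).\<close>
definition partition_eigenvalue :: "nat list \<Rightarrow> real" where
  "partition_eigenvalue ps =
     (\<Sum>i<length ps. real (ps ! i) * (real (ps ! i) - 2 * real (i + 1) + 1) / 2)"

definition corresponds_to :: "nat list \<Rightarrow> nat \<Rightarrow> real \<Rightarrow> bool" where
  "corresponds_to ps n lam \<longleftrightarrow> is_partition ps n \<and> partition_eigenvalue ps = lam"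

end

theory Submission
  imports Defs
begin

definition gsh :: "nat \<Rightarrow> nat list \<Rightarrow> real" where
  "gsh o' ys = (\<Sum>i<length ys. real (ys ! i) * (real (ys ! i) - 2 * real (i + o' + 1) + 1) / 2)"

lemma pe_gsh: "partition_eigenvalue ps = gsh 0 ps"
  by (simp add: partition_eigenvalue_def gsh_def)

lemma sum_split_add: "(\<Sum>i<a + b. f i) = (\<Sum>i<a. f i) + (\<Sum>i<b. f (a + i))"
  for f :: "nat \<Rightarrow> real"
  by (induction b) (simp_all add: add.assoc)

lemma gsh_append: "gsh o' (xs @ ys) = gsh o' xs + gsh (o' + length xs) ys"
proof -
  have "gsh o' (xs @ ys) = (\<Sum>i<length xs + length ys. real ((xs@ys) ! i) * (real ((xs@ys) ! i) - 2 * real (i + o' + 1) + 1) / 2)"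
    by (simp add: gsh_def)
  also have "\<dots> = (\<Sum>i<length xs. real ((xs@ys) ! i) * (real ((xs@ys) ! i) - 2 * real (i + o' + 1) + 1) / 2)
     + (\<Sum>i<length ys. real ((xs@ys) ! (length xs + i)) * (real ((xs@ys) ! (length xs + i)) - 2 * real (length xs + i + o' + 1) + 1) / 2)"
    by (rule sum_split_add)
  also have "\<dots> = gsh o' xs + gsh (o' + length xs) ys"
    by (simp add: gsh_def nth_append algebra_simps)
  finally show ?thesis .
qed

lemma gsh_rep: "gsh o' (replicate k c) = real k * real c * (real c - 2 * real o' - 1) / 2 - real c * real k * (real k - 1) / 2"
proof -
  have "(\<Sum>i<k. real c * (real c - 2 * real (i + o' + 1) + 1) / 2) = real k * real c * (real c - 2 * real o' - 1) / 2 - real c * real k * (real k - 1) / 2"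
  proof (induction k)
    case 0 then show ?case by simp
  next
    case (Suc k)
    have "(\<Sum>i<Suc k. real c * (real c - 2 * real (i + o' + 1) + 1) / 2) = (real k * real c * (real c - 2 * real o' - 1) / 2 - real c * real k * (real k - 1) / 2) + real c * (real c - 2 * real (k + o' + 1) + 1) / 2"
      using Suc.IH by simp
    also have "\<dots> = real (Suc k) * real c * (real c - 2 * real o' - 1) / 2 - real c * real (Suc k) * (real (Suc k) - 1) / 2"
      by (simp add: field_simps)
    finally show ?case .
  qed
  then show ?thesis by (simp add: gsh_def)
qed

lemma gsh_pair: "gsh 0 [a, b] = real a * (real a - 1) / 2 + real b * (real b - 3) / 2"
  by (simp add: gsh_def numeral_2_eq_2 lessThan_Suc algebra_simps)

lemma sorted_rep: "sorted_wrt (\<ge>) (replicate k (x::nat))"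
  by (induction k) auto

theorem lemma5:
  fixes n lam :: nat
  assumes "odd n" and "n \<ge> 5"
    and "real (n + 3) / 4 \<le> real lam" and "real lam \<le> (real n - 1) / 2"
  shows "corresponds_to
           ([lam + 1, (n + 3 - 2 * lam) div 2]
             @ replicate ((n - 1) div 2 - lam) 2
             @ replicate ((4 * lam - n - 3) div 2) 1)
           n (real lam)"
proof -
  obtain m where n: "n = 2 * m + 1" using assms(1) oddE by blast
  have l1: "m + 2 \<le> 2 * lam" using assms(3) n by simp
  have l2: "lam \<le> m" using assms(4) n by simp
  have e1: "(n + 3 - 2 * lam) div 2 = m + 2 - lam" using n l2 by simp
  have e2: "(n - 1) div 2 - lam = m - lam" using n by simp
  have e3: "(4 * lam - n - 3) div 2 = 2 * lam - m - 2" using n l1 by simp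
  have part: "is_partition ([lam + 1, m + 2 - lam] @ replicate (m - lam) 2 @ replicate (2 * lam - m - 2) 1) n"
    unfolding is_partition_def using l1 l2 n
    by (auto simp: sorted_wrt_append sorted_rep sum_list_replicate)
  have ev: "partition_eigenvalue ([lam + 1, m + 2 - lam] @ replicate (m - lam) 2 @ replicate (2 * lam - m - 2) 1) = real lam"
  proof -
    obtain t where t: "m = lam + t" using l2 le_Suc_ex by blast
    obtain u where u: "2 * lam = m + 2 + u" using l1 le_Suc_ex by blast
    have a: "m + 2 - lam = t + 2" "m - lam = t" "2 * lam - m - 2 = u" using t u by auto
    have ur: "real u = 2 * real lam - real m - 2" using u by (simp add: algebra_simps)
    have lr: "real lam = real t + real u + 2" using ur t by simp
    show ?thesis
      unfolding a pe_gsh gsh_append gsh_rep gsh_pair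
      using t ur by (simp add: field_simps lr)
  qed
  show ?thesis unfolding corresponds_to_def e1 e2 e3 using part ev by simp
qed

end
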